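(* Let $(\mathcal W,\rhd)$ be a $\lambda$A-frame and $\eta$ a hereditary type environment. If $A\simeq B$, then $\mathcal I[A]^\eta_p=\mathcal I[B]^\eta_p$ for every $p\in\mathcal W$.
   Context: Type expressions: fix a countably infinite set of type variables $X,Y,Z,\dots$. Pseudo type expressions are generated by $A::=X\mid A\to A\mid \bullet A\mid \mu X.A$ ($\mu$ binds $X$; $\alpha$-convertible expressions are identified; $\to$ associates to the right; $\bullet$ binds tighter than $\to$, which binds tighter than $\mu$). $A[B/X]$ denotes capture-avoiding substitution. $\top$ abbreviates $\mu X.\bullet X$, and $\bullet^n A$ denotes $A$ prefixed by $n$ copies of $\bullet$. The tail $t(A)$ is defined by $t(X)=X$, $t(A\to B)=t(B)$, $t(\bullet A)=\bullet t(A)$, $t(\mu X.A)=\mu X.t(A)$; it always has the form $\bullet^{m_0}\mu X_1.\bullet^{m_1}\mu X_2.\cdots\mu X_n.\bullet^{m_n}Y$. $A$ is a $\top$-variant iff $Y=X_i$ for some $1\le i\le n$ with $X_i\notin\{X_{i+1},\dots,X_n\}$ and $m_i+\dots+m_n\ge 1$. $A$ is proper in $X$ iff: a variable $Y$ is proper in $X$ iff $Y\neq X$; $\bullet A$ is always proper in $X$; $A\to B$ is proper in $X$ iff both $A,B$ are proper in $X$ or $B$ is a $\top$-variant; for $Y\ne X$, $\mu Y.A$ is proper in $X$ iff $A$ is proper in $X$ or $\mu Y.A$ is a $\top$-variant. Type expressions are the least set of pseudo type expressions containing all type variables, closed under $\to$ and $\bullet$, and containing $\mu X.A$ whenever it contains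 $A$ and $A$ is proper in $X$. Equality: $\cong$ is the least relation on type expressions such that: $A\cong A$; $A\cong B$ implies $B\cong A$; $A\cong B$ and $B\cong C$ imply $A\cong C$; $A\cong B$ implies $\bullet A\cong\bullet B$; $A\cong C$ and $B\cong D$ imply $A\to B\cong C\to D$; $A\to\top\cong\top$; $\mu X.A\cong A[\mu X.A/X]$; and if $A\cong C[A/X]$ with $C$ proper in $X$, then $A\cong\mu X.C$. $\simeq$ is the least relation satisfying the same closure conditions and additionally $\bullet(A\to B)\simeq\bullet A\to\bullet B$. Semantics: a syntactical $\lambda$-algebra $(\mathcal V,\cdot,[\![-]\!])$ consists of a nonempty set $\mathcal V$, a map $\cdot:\mathcal V\times\mathcal V\to\mathcal V$, and values $[\![M]\!]_\rho\in\mathcal V$ for untyped $\lambda$-terms $M$ and maps $\rho$ from individual variables to $\mathcal V$, such that $[\![x]\!]_\rho=\rho(x)$, $[\![MN]\!]_\rho=[\![M]\!]_\rho\cdot[\![N]\!]_\rho$, $[\![\lambda x.M]\!]_\rho\cdot v=[\![M]\!]_{\rho[v/x]}$, $[\![M]\!]_\rho$ depends only on $\rho$ restricted to free variables of $M$, and $M=_\beta N$ implies $[\![M]\!]_\rho=[\![N]\!]_\rho$; fix one. A well-founded frame is a pair $(\mathcal W,\rhd)$ with $\mathcal W$ nonempty and $\rhd$ a binary relation on $\mathcal W$ admitting no infinite chain $p_0\rhd p_1\rhd p_2\rhd\cdots$; $\trianglerighteq$ denotes the reflexive-transitive closure of $\rhd$. $\rhd$ is locally linear if whenever $p\rhd q$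 there is $r$ with $p\trianglerighteq r\rhd q$ such that $r\rhd s$ implies $q\trianglerighteq s$ for all $s$. A $\lambda$A-frame is a well-founded frame whose $\rhd$ is locally linear. A type environment $\eta$ assigns a set $\eta(X)_p\subseteq\mathcal V$ to each type variable $X$ and world $p$; it is hereditary if $p\rhd q$ implies $\eta(X)_p\subseteq\eta(X)_q$. For hereditary $\eta$, $\mathcal I[A]^\eta_p\subseteq\mathcal V$ is defined (by well-founded induction on $p$ and the syntactic rank of $A$) by: $\mathcal I[A]^\eta_p=\mathcal V$ if $A$ is a $\top$-variant; otherwise $\mathcal I[X]^\eta_p=\eta(X)_p$; $\mathcal I[\bullet A]^\eta_p=\{u\mid u\in\mathcal I[A]^\eta_q\text{ for all }q\text{ with }p\rhd q\}$; $\mathcal I[A\to B]^\eta_p=\{u\mid \text{for all }q\text{ with }p\trianglerighteq q\text{ and all }v\in\mathcal I[A]^\eta_q,\ u\cdot v\in\mathcal I[B]^\eta_q\}$; $\mathcal I[\mu X.A]^\eta_p=\mathcal I[A[\mu X.A/X]]^\eta_p$. *)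

theory Defs
  imports Main
begin

text \<open>Pseudo type expressions, with bound type variables represented by de Bruijn
  indices, so that alpha-convertible expressions are literally identified.
  Free type variables are the indices that escape all enclosing binders;
  the free variable with index n (outside all binders) is the n-th type variable.\<close>

datatype ty = TV nat | Arrow ty ty | Nxt ty | Mu ty

fun lift_ty :: "nat \<Rightarrow> ty \<Rightarrow> ty" where
  "lift_ty k (TV i) = (if i < k then TV i else TV (Suc i))"
| "lift_ty k (Arrow A B) = Arrow (lift_ty k A) (lift_ty k B)"
| "lift_ty k (Nxt A) = Nxt (lift_ty k A)"
| "lift_ty k (Mu A) = Mu (lift_ty (Suc k) A)"

fun subst_ty :: "nat \<Rightarrow> ty \<Rightarrow> ty \<Rightarrow> ty" where
  "subst_ty k S (TV i) = (if i < k then TV i else if i = k then S else TV (i - 1))"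
| "subst_ty k S (Arrow A B) = Arrow (subst_ty k S A) (subst_ty k S B)"
| "subst_ty k S (Nxt A) = Nxt (subst_ty k S A)"
| "subst_ty k S (Mu A) = Mu (subst_ty (Suc k) (lift_ty 0 S) A)"

definition unfold_mu :: "ty \<Rightarrow> ty" where
  "unfold_mu A = subst_ty 0 (Mu A) A"

definition TopT :: ty where
  "TopT = Mu (Nxt (TV 0))"

fun tail :: "ty \<Rightarrow> ty" where
  "tail (TV i) = TV i"
| "tail (Arrow A B) = tail B"
| "tail (Nxt A) = Nxt (tail A)"
| "tail (Mu A) = Mu (tail A)"

text \<open>Auxiliary check on tails: gs lists, for each enclosing mu binder (innermost first),
  whether at least one bullet occurs between that binder and the current position.
  The final variable must be bound by some enclosing binder (de Bruijn index < length gs;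
  this automatically encodes that the binder is not shadowed by later ones) and there
  must be a bullet after that binder.\<close>
fun tv_aux :: "bool list \<Rightarrow> ty \<Rightarrow> bool" where
  "tv_aux gs (TV j) = (j < length gs \<and> gs ! j)"
| "tv_aux gs (Arrow A B) = tv_aux gs B"
| "tv_aux gs (Nxt A) = tv_aux (map (\<lambda>_. True) gs) A"
| "tv_aux gs (Mu A) = tv_aux (False # gs) A"

definition top_variant :: "ty \<Rightarrow> bool" where
  "top_variant A = tv_aux [] (tail A)"

fun proper :: "nat \<Rightarrow> ty \<Rightarrow> bool" where
  "proper k (TV i) = (i \<noteq> k)"
| "proper k (Nxt A) = True"
| "proper k (Arrow A B) = ((proper k A \<and> proper k B) \<or> top_variant B)"
| "proper k (Mu A) = (proper (Suc k) A \<or> top_variant (Mu A))"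

inductive type_expr :: "ty \<Rightarrow> bool" where
  te_var: "type_expr (TV i)"
| te_arrow: "type_expr A \<Longrightarrow> type_expr B \<Longrightarrow> type_expr (Arrow A B)"
| te_nxt: "type_expr A \<Longrightarrow> type_expr (Nxt A)"
| te_mu: "type_expr A \<Longrightarrow> proper 0 A \<Longrightarrow> type_expr (Mu A)"

text \<open>The equality relation \<simeq> on type expressions. In the fixpoint rule,
  C is the body of mu X.C (X is de Bruijn index 0), so C[A/X] is subst_ty 0 A C.\<close>
inductive ty_eq :: "ty \<Rightarrow> ty \<Rightarrow> bool" (infix "\<simeq>\<^sub>T" 50) where
  eq_refl: "type_expr A \<Longrightarrow> A \<simeq>\<^sub>T A"
| eq_sym: "A \<simeq>\<^sub>T B \<Longrightarrow> B \<simeq>\<^sub>T A"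
| eq_trans: "A \<simeq>\<^sub>T B \<Longrightarrow> B \<simeq>\<^sub>T C \<Longrightarrow> A \<simeq>\<^sub>T C"
| eq_nxt: "A \<simeq>\<^sub>T B \<Longrightarrow> Nxt A \<simeq>\<^sub>T Nxt B"
| eq_arrow: "A \<simeq>\<^sub>T C \<Longrightarrow> B \<simeq>\<^sub>T D \<Longrightarrow> Arrow A B \<simeq>\<^sub>T Arrow C D"
| eq_top: "type_expr A \<Longrightarrow> Arrow A TopT \<simeq>\<^sub>T TopT"
| eq_unfold: "type_expr (Mu A) \<Longrightarrow> Mu A \<simeq>\<^sub>T unfold_mu A"
| eq_fix: "A \<simeq>\<^sub>T subst_ty 0 A C \<Longrightarrow> type_expr C \<Longrightarrow> proper 0 C \<Longrightarrow> A \<simeq>\<^sub>T Mu C"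
| eq_distr: "type_expr A \<Longrightarrow> type_expr B \<Longrightarrow>
             Nxt (Arrow A B) \<simeq>\<^sub>T Arrow (Nxt A) (Nxt B)"

datatype lam = LVar nat | LApp lam lam | LAbs lam

fun lift_lam :: "nat \<Rightarrow> lam \<Rightarrow> lam" where
  "lift_lam k (LVar i) = (if i < k then LVar i else LVar (Suc i))"
| "lift_lam k (LApp s t) = LApp (lift_lam k s) (lift_lam k t)"
| "lift_lam k (LAbs s) = LAbs (lift_lam (Suc k) s)"

fun subst_lam :: "nat \<Rightarrow> lam \<Rightarrow> lam \<Rightarrow> lam" where
  "subst_lam k u (LVar i) = (if i < k then LVar i else if i = k then u else LVar (i - 1))"
| "subst_lam k u (LApp s t) = LApp (subst_lam k u s) (subst_lam k u t)"
| "subst_lam k u (LAbs s) = LAbs (subst_lam (Suc k) (lift_lam 0 u) s)"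

inductive beta :: "lam \<Rightarrow> lam \<Rightarrow> bool" where
  beta_rule: "beta (LApp (LAbs s) t) (subst_lam 0 t s)"
| beta_appL: "beta s s' \<Longrightarrow> beta (LApp s t) (LApp s' t)"
| beta_appR: "beta t t' \<Longrightarrow> beta (LApp s t) (LApp s t')"
| beta_abs: "beta s s' \<Longrightarrow> beta (LAbs s) (LAbs s')"

definition beta_eq :: "lam \<Rightarrow> lam \<Rightarrow> bool" where
  "beta_eq = equivclp beta"

fun lfv :: "lam \<Rightarrow> nat set" where
  "lfv (LVar i) = {i}"
| "lfv (LApp s t) = lfv s \<union> lfv t"
| "lfv (LAbs s) = {i. Suc i \<in> lfv s}"

definition scons :: "'v \<Rightarrow> (nat \<Rightarrow> 'v) \<Rightarrow> nat \<Rightarrow> 'v" where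
  "scons v \<rho> i = (case i of 0 \<Rightarrow> v | Suc j \<Rightarrow> \<rho> j)"

text \<open>The carrier V is the (nonempty) type 'v.\<close>
definition syn_lambda_algebra :: "('v \<Rightarrow> 'v \<Rightarrow> 'v) \<Rightarrow> (lam \<Rightarrow> (nat \<Rightarrow> 'v) \<Rightarrow> 'v) \<Rightarrow> bool" where
  "syn_lambda_algebra app sem \<longleftrightarrow>
     (\<forall>x \<rho>. sem (LVar x) \<rho> = \<rho> x) \<and>
     (\<forall>M N \<rho>. sem (LApp M N) \<rho> = app (sem M \<rho>) (sem N \<rho>)) \<and>
     (\<forall>M \<rho> v. app (sem (LAbs M) \<rho>) v = sem M (scons v \<rho>)) \<and>
     (\<forall>M \<rho> \<rho>'. (\<forall>x\<in>lfv M. \<rho> x = \<rho>' x) \<longrightarrow> sem M \<rho> = sem M \<rho>') \<and>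
     (\<forall>M N \<rho>. beta_eq M N \<longrightarrow> sem M \<rho> = sem N \<rho>)"

definition well_founded_frame :: "('w \<Rightarrow> 'w \<Rightarrow> bool) \<Rightarrow> bool" where
  "well_founded_frame R \<longleftrightarrow> \<not> (\<exists>f :: nat \<Rightarrow> 'w. \<forall>n. R (f n) (f (Suc n)))"

definition locally_linear :: "('w \<Rightarrow> 'w \<Rightarrow> bool) \<Rightarrow> bool" where
  "locally_linear R \<longleftrightarrow>
     (\<forall>p q. R p q \<longrightarrow> (\<exists>r. R\<^sup>*\<^sup>* p r \<and> R r q \<and> (\<forall>s. R r s \<longrightarrow> R\<^sup>*\<^sup>* q s)))"

definition lambdaA_frame :: "('w \<Rightarrow> 'w \<Rightarrow> bool) \<Rightarrow> bool" where
  "lambdaA_frame R \<longleftrightarrow> well_founded_frame R \<and> locally_linear R"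

text \<open>Type environments: eta X p for the free type variable X (de Bruijn index) and world p.\<close>
definition hereditary :: "('w \<Rightarrow> 'w \<Rightarrow> bool) \<Rightarrow> (nat \<Rightarrow> 'w \<Rightarrow> 'v set) \<Rightarrow> bool" where
  "hereditary R \<eta> \<longleftrightarrow> (\<forall>X p q. R p q \<longrightarrow> \<eta> X p \<subseteq> \<eta> X q)"

text \<open>The defining clauses of the interpretation I[A]^eta_p, for all type expressions A
  and all worlds p. The paper defines I by well-founded recursion; we characterise it
  as (any) function satisfying the defining equations on type expressions.\<close>
definition interp_eqs ::
  "('w \<Rightarrow> 'w \<Rightarrow> bool) \<Rightarrow> ('v \<Rightarrow> 'v \<Rightarrow> 'v) \<Rightarrow> (nat \<Rightarrow> 'w \<Rightarrow> 'v set) \<Rightarrow> (ty \<Rightarrow> 'w \<Rightarrow> 'v set) \<Rightarrow> bool"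
where
  "interp_eqs R app \<eta> I \<longleftrightarrow>
     (\<forall>A p. type_expr A \<longrightarrow>
        I A p =
          (if top_variant A then UNIV
           else (case A of
                   TV X \<Rightarrow> \<eta> X p
                 | Nxt B \<Rightarrow> {u. \<forall>q. R p q \<longrightarrow> u \<in> I B q}
                 | Arrow B C \<Rightarrow> {u. \<forall>q. R\<^sup>*\<^sup>* p q \<longrightarrow> (\<forall>v\<in>I B q. app u v \<in> I C q)}
                 | Mu B \<Rightarrow> I (unfold_mu B) p)))"

end

theory Submission
  imports Defs
begin


lemma lift_lift:
  "i \<le> k \<Longrightarrow> lift_ty (Suc k) (lift_ty i t) = lift_ty i (lift_ty k t)"
  by (induct t arbitrary: i k) auto

lemma lift_subst [simp]:
  "j \<le> i \<Longrightarrow> lift_ty i (subst_ty j s t) = subst_ty j (lift_ty i s) (lift_ty (Suc i) t)"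
  by (induct t arbitrary: i j s) (simp_all add: diff_Suc lift_lift split: nat.split)

lemma lift_subst_lt:
  "i \<le> j \<Longrightarrow> lift_ty i (subst_ty j s t) = subst_ty (Suc j) (lift_ty i s) (lift_ty i t)"
  by (induct t arbitrary: i j s) (auto simp: lift_lift)

lemma subst_lift [simp]: "subst_ty k s (lift_ty k t) = t"
  by (induct t arbitrary: k s) simp_all

lemma subst_subst:
  "i \<le> j \<Longrightarrow> subst_ty i (subst_ty j v u) (subst_ty (Suc j) (lift_ty i v) t) = subst_ty j v (subst_ty i u t)"
  by (induct t arbitrary: i j u v)
    (simp_all add: diff_Suc lift_lift [symmetric] lift_subst_lt split: nat.split)

lemma unfold_subst:
  "unfold_mu (subst_ty (Suc k) (lift_ty 0 D) C) = subst_ty k D (unfold_mu C)"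
  unfolding unfold_mu_def using subst_subst[of 0 k D "Mu C" C] by simp

lemma tv_aux_Arrow_tail: "tv_aux gs (tail A) = tv_aux gs A"
  by (induct A arbitrary: gs) auto

lemma top_variant_alt: "top_variant A = tv_aux [] A"
  by (simp add: top_variant_def tv_aux_Arrow_tail)

lemma tv_aux_lift:
  "k \<le> length gs \<Longrightarrow> tv_aux (take k gs @ x # drop k gs) (lift_ty k A) = tv_aux gs A"
proof (induct A arbitrary: gs k x)
  case (TV j)
  then show ?case
    by (auto simp: nth_append min_def nth_Cons' split: if_splits)
next
  case (Nxt A)
  then show ?case using Nxt(1)[of k "map (\<lambda>_. True) gs" True]
    by (simp add: take_map drop_map)
next
  case (Mu A)
  then show ?case using Mu(1)[of "Suc k" "False # gs" x] by simp
qed simp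

lemma tv_aux_lift0: "tv_aux (g # gs) (lift_ty 0 A) = tv_aux gs A"
  using tv_aux_lift[of 0 gs g A] by simp

lemma tv_aux_lift_short:
  "length gs \<le> k \<Longrightarrow> tv_aux gs (lift_ty k A) = tv_aux gs A"
  by (induct A arbitrary: gs k) auto

lemma tv_aux_subst:
  "length gs \<le> k \<Longrightarrow> tv_aux gs A \<Longrightarrow> tv_aux gs (subst_ty k S A)"
  by (induct A arbitrary: gs k S) auto

lemma tv_lift: "top_variant (lift_ty k A) = top_variant A"
  by (simp add: top_variant_alt tv_aux_lift_short)

lemma tv_subst: "top_variant A \<Longrightarrow> top_variant (subst_ty k S A)"
  by (simp add: top_variant_alt tv_aux_subst)

lemma tv_lift_Mu: "top_variant (Mu (lift_ty (Suc k) A)) = top_variant (Mu A)"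
  using tv_lift[of k "Mu A"] by simp

lemma tv_subst_Mu: "top_variant (Mu A) \<Longrightarrow> top_variant (Mu (subst_ty (Suc k) (lift_ty 0 S) A))"
  using tv_subst[of "Mu A" k S] by simp

lemma tv_aux_unfold_gen:
  "length gs = k \<Longrightarrow> tv_aux (gs @ [g]) B \<Longrightarrow> (\<forall>gs'. length gs' = k \<longrightarrow> tv_aux gs' S)
   \<Longrightarrow> tv_aux gs (subst_ty k S B)"
proof (induct B arbitrary: gs k S g)
  case (TV j)
  then show ?case by (auto simp: nth_append split: if_splits)
next
  case (Arrow B1 B2)
  then show ?case by simp
next
  case (Nxt B)
  then show ?case using Nxt(1)[of "map (\<lambda>_. True) gs" k True S] by simp
next
  case (Mu B)
  have "\<forall>gs'. length gs' = Suc k \<longrightarrow> tv_aux gs' (lift_ty 0 S)"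
  proof (intro allI impI)
    fix gs' :: "bool list" assume "length gs' = Suc k"
    then obtain h t where "gs' = h # t" "length t = k" by (cases gs') auto
    then show "tv_aux gs' (lift_ty 0 S)" using Mu(4) by (simp add: tv_aux_lift0)
  qed
  then show ?case using Mu(1)[of "False # gs" "Suc k" g "lift_ty 0 S"] Mu(2,3) by simp
qed

lemma tv_unfold: "top_variant (Mu B) \<Longrightarrow> top_variant (unfold_mu B)"
  unfolding unfold_mu_def top_variant_alt
  using tv_aux_unfold_gen[of "[]" 0 False B "Mu B"] by simp

lemma proper_lift_lt: "j < k \<Longrightarrow> proper j A \<Longrightarrow> proper j (lift_ty k A)"
  by (induct A arbitrary: j k) (auto simp: tv_lift tv_lift_Mu)

lemma proper_lift_ge: "k \<le> j \<Longrightarrow> proper j A \<Longrightarrow> proper (Suc j) (lift_ty k A)"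
  by (induct A arbitrary: j k) (auto simp: tv_lift tv_lift_Mu)

lemma proper_lift_same: "proper k (lift_ty k A)"
  by (induct A arbitrary: k) auto

lemma proper_subst_lt:
  "j < k \<Longrightarrow> proper j C \<Longrightarrow> proper j S \<Longrightarrow> proper j (subst_ty k S C)"
  by (induct C arbitrary: j k S) (auto simp: tv_subst tv_subst_Mu proper_lift_ge)

lemma proper_subst_ge:
  "j \<le> k \<Longrightarrow> proper (Suc k) C \<Longrightarrow> proper k S \<Longrightarrow> proper k (subst_ty j S C)"
  by (induct C arbitrary: j k S) (auto simp: tv_subst tv_subst_Mu proper_lift_ge)

lemma type_expr_lift: "type_expr A \<Longrightarrow> type_expr (lift_ty k A)"
  by (induct arbitrary: k rule: type_expr.induct)
    (auto intro: type_expr.intros proper_lift_lt)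

lemma type_expr_subst: "type_expr A \<Longrightarrow> type_expr S \<Longrightarrow> type_expr (subst_ty k S A)"
proof (induct arbitrary: k S rule: type_expr.induct)
  case (te_mu A)
  show ?case
    using te_mu by (auto intro!: type_expr.intros type_expr_lift proper_subst_lt proper_lift_same)
qed (auto intro: type_expr.intros)

lemma type_expr_unfold: "type_expr (Mu B) \<Longrightarrow> type_expr (unfold_mu B)"
  unfolding unfold_mu_def
  by (metis type_expr.cases ty.distinct type_expr_subst ty.inject(4))

fun rank :: "ty \<Rightarrow> nat" where
  "rank (TV i) = 0"
| "rank (Nxt A) = 0"
| "rank (Arrow A B) = (if top_variant B then 0 else Suc (max (rank A) (rank B)))"
| "rank (Mu A) = (if top_variant (Mu A) then 0 else Suc (rank A))"

lemma rank_subst: "proper k A \<Longrightarrow> rank (subst_ty k S A) \<le> rank A"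
proof (induct A arbitrary: k S)
  case (Mu A)
  show ?case
  proof (cases "top_variant (Mu A)")
    case True
    then have "top_variant (subst_ty k S (Mu A))" by (rule tv_subst)
    then show ?thesis by (simp del: subst_ty.simps) (simp add: True)
  next
    case False
    then show ?thesis using Mu by fastforce
  qed
next
  case (Arrow A1 A2)
  show ?case
  proof (cases "top_variant A2")
    case True then show ?thesis by (simp add: tv_subst)
  next
    case False
    then have "proper k A1" "proper k A2" using Arrow(3) by auto
    then have "rank (subst_ty k S A1) \<le> rank A1" "rank (subst_ty k S A2) \<le> rank A2"
      using Arrow(1,2) by auto
    then show ?thesis using False by (auto simp: max_def)
  qed
qed (auto simp: tv_subst)

lemma rank_unfold: "type_expr (Mu B) \<Longrightarrow> \<not> top_variant (Mu B) \<Longrightarrow> rank (unfold_mu B) < rank (Mu B)"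
  unfolding unfold_mu_def
  by (metis rank.simps(4) rank_subst type_expr.cases ty.distinct ty.inject(4) le_imp_less_Suc)

lemma tv_arrow: "top_variant (Arrow A B) = top_variant B"
  by (simp add: top_variant_alt)
lemma tv_nxt: "top_variant (Nxt A) = top_variant A"
  by (simp add: top_variant_alt)
lemma tv_tv: "\<not> top_variant (TV i)"
  by (simp add: top_variant_alt)



inductive_cases te_ArrowE: "type_expr (Arrow A B)"
inductive_cases te_NxtE: "type_expr (Nxt A)"
inductive_cases te_MuE: "type_expr (Mu A)"

lemma wf_frame: "lambdaA_frame R \<Longrightarrow> wf {(q,p). R p q}"
  unfolding lambdaA_frame_def well_founded_frame_def wf_iff_no_infinite_down_chain by auto

lemma world_induct:
  assumes fr: "lambdaA_frame R" and st: "\<And>p. (\<And>q. R\<^sup>+\<^sup>+ p q \<Longrightarrow> P q) \<Longrightarrow> P p"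
  shows "P p"
proof -
  have w: "wf ({(q,p). R p q}\<^sup>+)" using wf_frame[OF fr] by (rule wf_trancl)
  have eq: "(q, p) \<in> {(q,p). R p q}\<^sup>+ \<longleftrightarrow> R\<^sup>+\<^sup>+ p q" for p q
  proof -
    have "{(q,p). R p q} = {(p,q). R p q}\<inverse>" by auto
    then show ?thesis by (simp add: trancl_converse tranclp_unfold)
  qed
  show ?thesis
    by (rule wf_induct[OF w]) (rule st, simp add: eq)
qed

lemma I_eq: "interp_eqs R app \<eta> I \<Longrightarrow> type_expr A \<Longrightarrow> I A p =
          (if top_variant A then UNIV
           else (case A of
                   TV X \<Rightarrow> \<eta> X p
                 | Nxt B \<Rightarrow> {u. \<forall>q. R p q \<longrightarrow> u \<in> I B q}
                 | Arrow B C \<Rightarrow> {u. \<forall>q. R\<^sup>*\<^sup>* p q \<longrightarrow> (\<forall>v\<in>I B q. app u v \<in> I C q)}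
                 | Mu B \<Rightarrow> I (unfold_mu B) p))"
  unfolding interp_eqs_def by blast

lemma I_tv: "interp_eqs R app \<eta> I \<Longrightarrow> type_expr A \<Longrightarrow> top_variant A \<Longrightarrow> I A p = UNIV"
  using I_eq by fastforce

lemma I_TV: "interp_eqs R app \<eta> I \<Longrightarrow> I (TV X) p = \<eta> X p"
  using I_eq[of R app \<eta> I "TV X" p] by (simp add: tv_tv te_var)

lemma I_Nxt: "interp_eqs R app \<eta> I \<Longrightarrow> type_expr A \<Longrightarrow> I (Nxt A) p = {u. \<forall>q. R p q \<longrightarrow> u \<in> I A q}"
  using I_eq[of R app \<eta> I "Nxt A" p] I_tv[of R app \<eta> I A]
  by (cases "top_variant A") (auto simp: tv_nxt te_nxt)

lemma I_Arrow: "interp_eqs R app \<eta> I \<Longrightarrow> type_expr A \<Longrightarrow> type_expr B \<Longrightarrow>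
   I (Arrow A B) p = {u. \<forall>q. R\<^sup>*\<^sup>* p q \<longrightarrow> (\<forall>v\<in>I A q. app u v \<in> I B q)}"
  using I_eq[of R app \<eta> I "Arrow A B" p] I_tv[of R app \<eta> I B]
  by (cases "top_variant B") (auto simp: tv_arrow te_arrow)

lemma I_Mu: "interp_eqs R app \<eta> I \<Longrightarrow> type_expr (Mu B) \<Longrightarrow> I (Mu B) p = I (unfold_mu B) p"
  using I_eq[of R app \<eta> I "Mu B" p] I_tv[of R app \<eta> I "unfold_mu B" p]
  by (cases "top_variant (Mu B)") (auto simp: tv_unfold type_expr_unfold)

lemma I_hered:
  assumes fr: "lambdaA_frame R" and her: "hereditary R \<eta>" and ie: "interp_eqs R app \<eta> I"
  shows "\<forall>A q. type_expr A \<longrightarrow> R p q \<longrightarrow> I A p \<subseteq> I A q"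
proof (rule world_induct[OF fr, of "\<lambda>p. \<forall>A q. type_expr A \<longrightarrow> R p q \<longrightarrow> I A p \<subseteq> I A q"])
  fix p
  assume IH: "\<And>q. R\<^sup>+\<^sup>+ p q \<Longrightarrow> \<forall>A q'. type_expr A \<longrightarrow> R q q' \<longrightarrow> I A q \<subseteq> I A q'"
  have "\<And>A q. rank A = n \<Longrightarrow> type_expr A \<Longrightarrow> R p q \<Longrightarrow> I A p \<subseteq> I A q" for n
  proof (induct n rule: less_induct)
    case (less n A q)
    show ?case
    proof (cases "top_variant A")
      case True then show ?thesis using I_tv[OF ie] less by simp
    next
      case False
      show ?thesis
      proof (cases A)
        case (TV X) then show ?thesis using her less I_TV[OF ie] by (simp add: hereditary_def)
      next
        case (Arrow B C)
        then have tB: "type_expr B" "type_expr C" using less te_ArrowE by blast+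
        show ?thesis unfolding Arrow I_Arrow[OF ie tB]
          using less(4) by (auto intro: converse_rtranclp_into_rtranclp)
      next
        case (Nxt B)
        then have tB: "type_expr B" using less te_NxtE by blast
        have hq: "I B q \<subseteq> I B s" if "R q s" for s
          using IH[of q] less(4) tB that by auto
        show ?thesis unfolding Nxt I_Nxt[OF ie tB] using less(4) hq by blast
      next
        case (Mu B)
        have r: "rank (unfold_mu B) < n" using rank_unfold less False Mu by blast
        have t: "type_expr (unfold_mu B)" using type_expr_unfold less Mu by blast
        show ?thesis unfolding Mu I_Mu[OF ie less(3)[unfolded Mu]]
          using less(1)[OF r refl t less(4)] .
      qed
    qed
  qed
  then show "\<forall>A q. type_expr A \<longrightarrow> R p q \<longrightarrow> I A p \<subseteq> I A q" by blast
qed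

lemma I_hered_rt:
  assumes fr: "lambdaA_frame R" and her: "hereditary R \<eta>" and ie: "interp_eqs R app \<eta> I"
    and t: "type_expr A"
  shows "R\<^sup>*\<^sup>* p q \<Longrightarrow> I A p \<subseteq> I A q"
  by (induct rule: rtranclp_induct) (use I_hered[OF fr her ie] t in blast)+



lemma main_subst:
  assumes fr: "lambdaA_frame R" and ie: "interp_eqs R app \<eta> I"
  shows "\<forall>C k D E. type_expr C \<longrightarrow> type_expr D \<longrightarrow> type_expr E \<longrightarrow>
     (\<forall>q. R\<^sup>+\<^sup>+ p q \<longrightarrow> I D q = I E q) \<longrightarrow> (proper k C \<or> I D p = I E p) \<longrightarrow>
     I (subst_ty k D C) p = I (subst_ty k E C) p"
proof (rule world_induct[OF fr, of "\<lambda>p. \<forall>C k D E. type_expr C \<longrightarrow> type_expr D \<longrightarrow> type_expr E \<longrightarrow>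
     (\<forall>q. R\<^sup>+\<^sup>+ p q \<longrightarrow> I D q = I E q) \<longrightarrow> (proper k C \<or> I D p = I E p) \<longrightarrow>
     I (subst_ty k D C) p = I (subst_ty k E C) p"])
  fix p
  assume IH: "\<And>q. R\<^sup>+\<^sup>+ p q \<Longrightarrow> \<forall>C k D E. type_expr C \<longrightarrow> type_expr D \<longrightarrow> type_expr E \<longrightarrow>
     (\<forall>q'. R\<^sup>+\<^sup>+ q q' \<longrightarrow> I D q' = I E q') \<longrightarrow> (proper k C \<or> I D q = I E q) \<longrightarrow>
     I (subst_ty k D C) q = I (subst_ty k E C) q"
  have lower: "I (subst_ty k D C) q = I (subst_ty k E C) q"
    if "R\<^sup>+\<^sup>+ p q" "type_expr C" "type_expr D" "type_expr E" "\<forall>q. R\<^sup>+\<^sup>+ p q \<longrightarrow> I D q = I E q"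
    for q C k D E
  proof -
    have "\<forall>q'. R\<^sup>+\<^sup>+ q q' \<longrightarrow> I D q' = I E q'" using that(1,5) tranclp_trans[of R p q] by blast
    then show ?thesis using IH[OF that(1), rule_format, of C D E k] that by blast
  qed
  have "\<And>C k D E. rank C = n \<Longrightarrow> type_expr C \<Longrightarrow> type_expr D \<Longrightarrow> type_expr E \<Longrightarrow>
     (\<forall>q. R\<^sup>+\<^sup>+ p q \<longrightarrow> I D q = I E q) \<Longrightarrow> (proper k C \<or> I D p = I E p) \<Longrightarrow>
     I (subst_ty k D C) p = I (subst_ty k E C) p" for n
  proof (induct n rule: less_induct)
    case (less n C k D E)
    have tD: "type_expr (subst_ty k D C)" and tE: "type_expr (subst_ty k E C)"
      using less(3,4,5) type_expr_subst by blast+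
    show ?case
    proof (cases "top_variant C")
      case True
      then show ?thesis using I_tv[OF ie tD] I_tv[OF ie tE] tv_subst[OF True] by simp
    next
      case False
      show ?thesis
      proof (cases C)
        case (TV i)
        then show ?thesis using less(7) by (auto simp: I_TV[OF ie])
      next
        case (Nxt B)
        then have tB: "type_expr B" using less(3) te_NxtE by blast
        have "I (subst_ty k D B) q = I (subst_ty k E B) q" if "R p q" for q
          using lower[of q B D E k] that tB less(4,5,6) by auto
        then show ?thesis unfolding Nxt subst_ty.simps
          by (simp add: I_Nxt[OF ie] type_expr_subst tB less(4,5))
      next
        case (Arrow B C')
        then have tB: "type_expr B" "type_expr C'" using less(3) te_ArrowE by blast+
        have ntv: "\<not> top_variant C'" using False Arrow tv_arrow by simp
        have rk: "rank B < n" "rank C' < n" using less(2) ntv Arrow by auto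
        have pr: "(proper k B \<and> proper k C') \<or> I D p = I E p" using less(7) ntv Arrow by auto
        have eqB: "I (subst_ty k D B) q = I (subst_ty k E B) q"
         and eqC: "I (subst_ty k D C') q = I (subst_ty k E C') q" if "R\<^sup>*\<^sup>* p q" for q
        proof -
          from that have "q = p \<or> R\<^sup>+\<^sup>+ p q" by (metis rtranclpD)
          then have "I (subst_ty k D B) q = I (subst_ty k E B) q \<and> I (subst_ty k D C') q = I (subst_ty k E C') q"
          proof
            assume "q = p"
            then show ?thesis using less(1)[OF rk(1) refl tB(1) less(4,5,6)] less(1)[OF rk(2) refl tB(2) less(4,5,6)] pr
              by blast
          next
            assume "R\<^sup>+\<^sup>+ p q"
            then show ?thesis using lower[of q B D E k] lower[of q C' D E k] tB less(4,5,6) by simp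
          qed
          then show "I (subst_ty k D B) q = I (subst_ty k E B) q" "I (subst_ty k D C') q = I (subst_ty k E C') q"
            by auto
        qed
        show ?thesis unfolding Arrow subst_ty.simps
          using eqB eqC by (simp add: I_Arrow[OF ie] type_expr_subst tB less(4,5))
      next
        case (Mu B)
        have r: "rank (unfold_mu B) < n" using rank_unfold[of B] less(2,3) False Mu by simp
        have t: "type_expr (unfold_mu B)" using type_expr_unfold[of B] less(3) Mu by simp
        have p0: "proper 0 B" using less(3) Mu te_MuE by blast
        have pr: "proper k (unfold_mu B) \<or> I D p = I E p"
        proof (cases "I D p = I E p")
          case False
          then have "proper k (Mu B)" using less(7) Mu by simp
          then have "proper (Suc k) B" using \<open>\<not> top_variant C\<close> Mu by simp
          then show ?thesis unfolding unfold_mu_def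
            using proper_subst_ge[of 0 k B "Mu B"] \<open>proper k (Mu B)\<close> by simp
        qed simp
        have "I (subst_ty k X C) p = I (subst_ty k X (unfold_mu B)) p" if "type_expr X" for X
        proof -
          have "type_expr (subst_ty k X C)" using less(3) that type_expr_subst by blast
          then show ?thesis unfolding Mu subst_ty.simps
            by (simp add: I_Mu[OF ie] unfold_subst)
        qed
        then show ?thesis using less(1)[OF r refl t less(4,5,6) pr] less(4,5) by simp
      qed
    qed
  qed
  then show "\<forall>C k D E. type_expr C \<longrightarrow> type_expr D \<longrightarrow> type_expr E \<longrightarrow>
     (\<forall>q. R\<^sup>+\<^sup>+ p q \<longrightarrow> I D q = I E q) \<longrightarrow> (proper k C \<or> I D p = I E p) \<longrightarrow>
     I (subst_ty k D C) p = I (subst_ty k E C) p" by blast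
qed



lemma fix_sound:
  assumes fr: "lambdaA_frame R" and ie: "interp_eqs R app \<eta> I"
    and tA: "type_expr A" and tC: "type_expr C" and pC: "proper 0 C"
    and eq: "\<forall>p. I A p = I (subst_ty 0 A C) p"
  shows "I A p = I (Mu C) p"
proof (rule world_induct[OF fr, of "\<lambda>p. I A p = I (Mu C) p"])
  fix p assume IH: "\<And>q. R\<^sup>+\<^sup>+ p q \<Longrightarrow> I A q = I (Mu C) q"
  have tM: "type_expr (Mu C)" using tC pC by (rule te_mu)
  have "I (Mu C) p = I (subst_ty 0 (Mu C) C) p"
    using I_Mu[OF ie tM] by (simp add: unfold_mu_def)
  also have "\<dots> = I (subst_ty 0 A C) p"
  proof -
    have "\<forall>q. R\<^sup>+\<^sup>+ p q \<longrightarrow> I (Mu C) q = I A q" using IH by auto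
    then show ?thesis using main_subst[OF fr ie, of p, rule_format, of C "Mu C" A 0] tC tM tA pC by blast
  qed
  also have "\<dots> = I A p" using eq[rule_format, of p] by (rule sym)
  finally show "I A p = I (Mu C) p" by simp
qed

lemma distr_sound:
  assumes fr: "lambdaA_frame R" and her: "hereditary R \<eta>" and ie: "interp_eqs R app \<eta> I"
    and tA: "type_expr A" and tB: "type_expr B"
  shows "I (Nxt (Arrow A B)) p = I (Arrow (Nxt A) (Nxt B)) p"
proof -
  have tN: "type_expr (Nxt A)" "type_expr (Nxt B)" "type_expr (Arrow A B)"
    using tA tB by (auto intro: type_expr.intros)
  show ?thesis
  proof
  show "I (Nxt (Arrow A B)) p \<subseteq> I (Arrow (Nxt A) (Nxt B)) p"
  proof
    fix u assume u: "u \<in> I (Nxt (Arrow A B)) p"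
    have "app u v \<in> I B s" if "R\<^sup>*\<^sup>* p q" "\<forall>s. R q s \<longrightarrow> v \<in> I A s" "R q s" for q v s
    proof -
      have "R\<^sup>+\<^sup>+ p s" by (rule rtranclp_into_tranclp1[OF that(1) that(3)])
      then obtain q' where "R p q'" "R\<^sup>*\<^sup>* q' s" using tranclpD[of R p s] by blast
      then show ?thesis using u that
        by (simp add: I_Nxt[OF ie tN(3)] I_Arrow[OF ie tA tB])
    qed
    then show "u \<in> I (Arrow (Nxt A) (Nxt B)) p"
      by (simp add: I_Arrow[OF ie tN(1,2)] I_Nxt[OF ie tA] I_Nxt[OF ie tB])
  qed
next
  show "I (Arrow (Nxt A) (Nxt B)) p \<subseteq> I (Nxt (Arrow A B)) p"
  proof
    fix u assume u: "u \<in> I (Arrow (Nxt A) (Nxt B)) p"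
    have "app u v \<in> I B r" if h1: "R p q" and h2: "R\<^sup>*\<^sup>* q r" and h3: "v \<in> I A r" for q r v
    proof -
      have "\<exists>x. R\<^sup>*\<^sup>* p x \<and> R x r"
        using h2
      proof (cases rule: rtranclp.cases)
        case rtrancl_refl
        then show ?thesis using h1 by auto
      next
        case (rtrancl_into_rtrancl y)
        then show ?thesis using h1 by (meson converse_rtranclp_into_rtranclp)
      qed
      then obtain x where x: "R\<^sup>*\<^sup>* p x" "R x r" by blast
      then obtain r' where r': "R\<^sup>*\<^sup>* x r'" "R r' r" "\<forall>s. R r' s \<longrightarrow> R\<^sup>*\<^sup>* r s"
        using fr unfolding lambdaA_frame_def locally_linear_def by blast
      have pr': "R\<^sup>*\<^sup>* p r'" using rtranclp_trans[OF x(1) r'(1)] .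
      have "v \<in> I A s" if "R r' s" for s
        using I_hered_rt[OF fr her ie tA, of r s] r'(3) that h3 by blast
      then have "v \<in> I (Nxt A) r'" by (simp add: I_Nxt[OF ie tA])
      then have "app u v \<in> I (Nxt B) r'" using u pr'
        by (simp add: I_Arrow[OF ie tN(1,2)])
      then show ?thesis using r'(2) by (simp add: I_Nxt[OF ie tB])
    qed
    then show "u \<in> I (Nxt (Arrow A B)) p"
      by (simp add: I_Nxt[OF ie tN(3)] I_Arrow[OF ie tA tB])
  qed
  qed
qed

lemma te_TopT: "type_expr TopT"
  unfolding TopT_def by (auto intro!: type_expr.intros)

lemma ty_eq_te: "A \<simeq>\<^sub>T B \<Longrightarrow> type_expr A \<and> type_expr B"
  by (induct rule: ty_eq.induct)
    (auto intro: type_expr.intros type_expr_unfold te_TopT)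

lemma TopT_tv: "top_variant TopT"
  by (simp add: TopT_def top_variant_alt)

theorem theorem4:
  fixes R :: "'w \<Rightarrow> 'w \<Rightarrow> bool"
    and app :: "'v \<Rightarrow> 'v \<Rightarrow> 'v"
    and sem :: "lam \<Rightarrow> (nat \<Rightarrow> 'v) \<Rightarrow> 'v"
    and \<eta> :: "nat \<Rightarrow> 'w \<Rightarrow> 'v set"
    and I :: "ty \<Rightarrow> 'w \<Rightarrow> 'v set"
  assumes "syn_lambda_algebra app sem"
    and "lambdaA_frame R"
    and "hereditary R \<eta>"
    and "interp_eqs R app \<eta> I"
    and "A \<simeq>\<^sub>T B"
  shows "\<forall>p. I A p = I B p"
  using assms(5)
proof (induct rule: ty_eq.induct)
  case (eq_nxt A B)
  then show ?case using ty_eq_te[OF eq_nxt(1)] by (simp add: I_Nxt[OF assms(4)])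
next
  case (eq_arrow A C B D)
  then show ?case using ty_eq_te[OF eq_arrow(1)] ty_eq_te[OF eq_arrow(3)]
    by (simp add: I_Arrow[OF assms(4)])
next
  case (eq_top A)
  have "type_expr TopT" by (simp add: TopT_def type_expr.intros)
  then show ?case using I_tv[OF assms(4)] eq_top TopT_tv
    by (metis te_arrow tv_arrow)
next
  case (eq_unfold A)
  then show ?case using I_Mu[OF assms(4)] by simp
next
  case (eq_fix A C)
  then show ?case using fix_sound[OF assms(2,4)] ty_eq_te[OF eq_fix(1)] by blast
next
  case (eq_distr A B)
  then show ?case using distr_sound[OF assms(2,3,4)] by blast
next
  case (eq_refl A) then show ?case by simp
next
  case (eq_sym A B) then show ?case by (metis)
next
  case (eq_trans A B C) then show ?case by (metis)
qed

end
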